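(* Let $m\in\mathbb{N}$ and $n\in\mathbb{N}_0$ with $1\le m\le n$, $\theta'\in[0,\pi]$, and $\phi,\phi'\in[0,2\pi)$. Then \[ \int_0^\pi P_n(\cos\gamma)\,\mathrm{P}^m_n(\cos\theta)\,\frac{1}{\sin\theta}\,d\theta=\frac{2}{m}\,\mathrm{P}^m_n(\cos\theta')\cos(m(\phi-\phi')), \] where $\cos\gamma=\cos\theta\cos\theta'+\sin\theta\sin\theta'\cos(\phi-\phi')$.
   Context: $P_n$ is the Legendre polynomial, $P_n(z)={}_2F_1\!\left(-n,n+1;1;\frac{1-z}{2}\right)$. $\mathrm{P}^m_n$ is the Ferrers function of the first kind: for integers $0\le m\le n$ and $x\in[-1,1]$, $\mathrm{P}^m_n(x)=(-1)^m(1-x^2)^{m/2}\frac{d^m}{dx^m}P_n(x)$. *)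

theory Defs
  imports "HOL-Analysis.Analysis" "HOL-Computational_Algebra.Polynomial"
begin

text \<open>Legendre polynomial P_n(z) = 2F1(-n, n+1; 1; (1-z)/2), as a real polynomial.
  The hypergeometric series terminates since (-n)_k = 0 for k > n.\<close>
definition legendre_poly :: "nat \<Rightarrow> real poly" where
  "legendre_poly n = (\<Sum>k\<le>n. smult (pochhammer (- real n) k * pochhammer (real n + 1) k
       / (fact k)^2) ([:1/2, -1/2:] ^ k))"

definition legendre :: "nat \<Rightarrow> real \<Rightarrow> real" where
  "legendre n z = poly (legendre_poly n) z"

definition ferrers :: "nat \<Rightarrow> nat \<Rightarrow> real \<Rightarrow> real" where
  "ferrers m n x = (-1)^m * (1 - x^2) powr (real m / 2) * poly ((pderiv ^^ m) (legendre_poly n)) x"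

end

theory Submission
  imports Defs
begin

definition hc :: "nat \<Rightarrow> nat \<Rightarrow> real" where
  "hc n k = pochhammer (- real n) k * pochhammer (real n + 1) k / (fact k)^2"

definition hF :: "nat \<Rightarrow> real poly" where
  "hF n = (\<Sum>k\<le>n. monom (hc n k) k)"

lemma hc_zero: "k > n \<Longrightarrow> hc n k = 0"
  unfolding hc_def by (auto simp: pochhammer_eq_0_iff)

lemma coeff_hF: "coeff (hF n) k = hc n k"
  unfolding hF_def by (auto simp: coeff_sum coeff_monom hc_zero not_le)

lemma hc_rec: "hc n (Suc k) * (real k + 1)^2 = (real k - real n) * (real k + real n + 1) * hc n k"
proof -
  have f: "(fact (Suc k) :: real)^2 = (fact k)^2 * (real k + 1)^2"
    by (simp add: power2_eq_square algebra_simps)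
  have "hc n (Suc k) = pochhammer (- real n) k * pochhammer (real n + 1) k * ((real k - real n) * (real k + real n + 1)) / ((fact k)^2 * (real k + 1)^2)"
    unfolding hc_def f by (simp add: pochhammer_Suc algebra_simps)
  then show ?thesis unfolding hc_def by (simp add: field_simps)
qed

lemma legendre_poly_hF: "legendre_poly n = pcompose (hF n) [:1/2, -1/2:]"
proof -
  have "poly (legendre_poly n) x = poly (pcompose (hF n) [:1/2, -1/2:]) x" for x
    unfolding legendre_poly_def hF_def poly_pcompose
    by (simp add: poly_sum poly_monom hc_def)
  then show ?thesis using poly_eq_poly_eq_iff by blast
qed

lemma coeff_3_mult: "coeff ([:a,b,c:] * p) k =
   a * coeff p k + (if k = 0 then 0 else b * coeff p (k-1)) + (if k \<le> 1 then 0 else c * coeff p (k-2))"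
  by (cases k; cases "k-1") (auto simp: coeff_pCons algebra_simps)

lemma coeff_2_mult: "coeff ([:a,b:] * p) k =
   a * coeff p k + (if k = 0 then 0 else b * coeff p (k-1))"
  by (cases k) (auto simp: coeff_pCons)

lemma hF_ode: "[:0,1,-1:] * pderiv (pderiv (hF n)) + [:1,-2:] * pderiv (hF n) + smult (real n * (real n + 1)) (hF n) = 0"
proof (rule poly_eqI)
  fix k
  show "coeff ([:0,1,-1:] * pderiv (pderiv (hF n)) + [:1,-2:] * pderiv (hF n) + smult (real n * (real n + 1)) (hF n)) k = coeff 0 k"
  proof (cases k)
    case 0
    then show ?thesis by (simp add: coeff_3_mult coeff_2_mult coeff_pderiv coeff_hF hc_def)
  next
    case (Suc j)
    have r: "hc n (Suc (Suc j)) * (real j + 2)^2 = (real j + 1 - real n) * (real j + real n + 2) * hc n (Suc j)"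
      using hc_rec[of n "Suc j"] by (simp add: algebra_simps)
    show ?thesis using Suc r
      by (cases j) (auto simp: coeff_3_mult coeff_2_mult coeff_pderiv coeff_hF algebra_simps power2_eq_square)
  qed
qed

abbreviation D :: "nat \<Rightarrow> nat \<Rightarrow> real poly" where
  "D n j \<equiv> (pderiv ^^ j) (legendre_poly n)"

lemma leg_ode: "[:1,0,-1:] * pderiv (pderiv (legendre_poly n)) - smult 2 ([:0,1:] * pderiv (legendre_poly n))
   + smult (real n * (real n + 1)) (legendre_poly n) = 0"
proof -
  let ?F = "hF n"
  have d1: "pderiv (legendre_poly n) = pcompose (pderiv ?F) [:1/2,-1/2:] * [:-1/2:]"
    unfolding legendre_poly_hF by (simp add: pderiv_pcompose pderiv_pCons)
  have d2: "pderiv (pderiv (legendre_poly n)) = pcompose (pderiv (pderiv ?F)) [:1/2,-1/2:] * [:1/4:]"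
    unfolding d1 by (simp add: pderiv_pcompose pderiv_pCons pderiv_mult pderiv_minus pderiv_smult)
  have "poly ([:1,0,-1:] * pderiv (pderiv (legendre_poly n)) - smult 2 ([:0,1:] * pderiv (legendre_poly n))
   + smult (real n * (real n + 1)) (legendre_poly n)) x = 0" for x
  proof -
    define y where "y = 1/2 - x/2"
    have e: "poly ([:0,1,-1:] * pderiv (pderiv ?F) + [:1,-2:] * pderiv ?F + smult (real n * (real n + 1)) ?F) y = 0"
      using hF_ode[of n] by simp
    have x: "x = 1 - 2*y" unfolding y_def by simp
    have p0: "poly (legendre_poly n) x = poly ?F y"
      unfolding legendre_poly_hF by (simp add: poly_pcompose y_def)
    have p1: "poly (pderiv (legendre_poly n)) x = - poly (pderiv ?F) y / 2"
      unfolding d1 by (simp add: poly_pcompose y_def)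
    have p2: "poly (pderiv (pderiv (legendre_poly n))) x = poly (pderiv (pderiv ?F)) y / 4"
      unfolding d2 by (simp add: poly_pcompose y_def)
    show ?thesis
      apply (simp only: poly_add poly_diff poly_mult poly_smult p0 p1 p2)
      using e unfolding x by (simp add: field_simps)
  qed
  then show ?thesis using poly_all_0_iff_0 by blast
qed

lemma D_Suc: "D n (Suc j) = pderiv (D n j)"
  by simp

lemma geg_ode: "[:1,0,-1:] * D n (j+2) - smult (2*(real j+1)) ([:0,1:] * D n (j+1))
   + smult ((real n - real j) * (real n + real j + 1)) (D n j) = 0"
proof (induction j)
  case 0
  then show ?case using leg_ode[of n] by (simp add: numeral_2_eq_2 algebra_simps)
next
  case (Suc j)
  let ?E = "[:1,0,-1:] * D n (j+2) - smult (2*(real j+1)) ([:0,1:] * D n (j+1))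
   + smult ((real n - real j) * (real n + real j + 1)) (D n j)"
  have "pderiv ?E = 0" using Suc by simp
  moreover have "pderiv ?E = [:1,0,-1:] * D n (Suc j+2) - smult (2*(real (Suc j)+1)) ([:0,1:] * D n (Suc j+1))
   + smult ((real n - real (Suc j)) * (real n + real (Suc j) + 1)) (D n (Suc j))"
  proof -
    have "poly (pderiv ?E) x = poly ([:1,0,-1:] * D n (Suc j+2) - smult (2*(real (Suc j)+1)) ([:0,1:] * D n (Suc j+1))
   + smult ((real n - real (Suc j)) * (real n + real (Suc j) + 1)) (D n (Suc j))) x" for x
      by (simp add: pderiv_add pderiv_diff pderiv_mult pderiv_smult pderiv_pCons pderiv_minus algebra_simps numeral_2_eq_2 numeral_3_eq_3)
    then show ?thesis using poly_eq_poly_eq_iff by blast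
  qed
  ultimately show ?case by simp
qed

lemma degree_legendre: "degree (legendre_poly n) \<le> n"
  unfolding legendre_poly_def
proof (rule degree_sum_le)
  fix k assume "k \<in> {..n}"
  then have "degree ([:1/2, -1/2:] ^ k :: real poly) \<le> k"
    using degree_power_le[of "[:1/2, -1/2:] :: real poly" k] by simp
  then show "degree (smult (pochhammer (- real n) k * pochhammer (real n + 1) k / (fact k)\<^sup>2)
              ([:1 / 2, - 1 / 2:] ^ k)) \<le> n"
    using \<open>k \<in> {..n}\<close> by (meson atMost_iff degree_smult_le le_trans)
qed simp

lemma degree_D: "degree (D n j) \<le> n - j"
  using degree_legendre[of n] by (simp add: degree_higher_pderiv)

lemma coeff_D_zero: "k + j > n \<Longrightarrow> coeff (D n j) k = 0"
  by (simp add: coeff_higher_pderiv coeff_eq_0[OF le_less_trans[OF degree_legendre]] add.commute)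

lemma legendre_1: "poly (legendre_poly n) 1 = 1"
  unfolding legendre_poly_def by (simp add: poly_sum hc_def)

lemma geg_rec: "(real k + 1) * (real k + 2) * coeff (D n j) (k+2)
   = (real k + real j - real n) * (real k + real n + real j + 1) * coeff (D n j) k"
proof -
  have E: "coeff ([:1,0,-1:] * D n (j+2)) k - coeff (smult (2*(real j+1)) ([:0,1:] * D n (j+1))) k
   + (real n - real j) * (real n + real j + 1) * coeff (D n j) k = 0"
    using arg_cong[OF geg_ode[where n=n and j=j], of "\<lambda>p. coeff p k"] by simp
  have d2: "coeff (D n (j+2)) i = (real i + 1) * (real i + 2) * coeff (D n j) (i+2)" for i
    by (simp add: coeff_pderiv algebra_simps numeral_2_eq_2)
  have d1: "coeff (D n (j+1)) i = (real i + 1) * coeff (D n j) (i+1)" for i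
    by (simp add: coeff_pderiv algebra_simps)
  have c3: "coeff ([:1,0,-1:] * D n (j+2)) k = coeff (D n (j+2)) k - (if k \<le> 1 then 0 else coeff (D n (j+2)) (k-2))"
    unfolding coeff_3_mult by simp
  have c2: "coeff ([:0,1:] * D n (j+1)) k = (if k = 0 then 0 else coeff (D n (j+1)) (k-1))"
    unfolding coeff_2_mult by simp
  show ?thesis
  proof (cases k)
    case 0
    then show ?thesis using E unfolding c3 c2 d2 by (simp add: algebra_simps)
  next
    case (Suc i)
    show ?thesis
    proof (cases i)
      case 0
      then show ?thesis using E Suc unfolding c3 c2 d2 d1 by (simp add: algebra_simps coeff_pderiv)
    next
      case (Suc l)
      then have "k - 2 = l" "k - 1 = l + 1" "k = l + 2" using \<open>k = Suc i\<close> by auto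
      then show ?thesis using E \<open>k = Suc i\<close> unfolding c3 c2 d2 d1 by (simp add: algebra_simps coeff_pderiv)
    qed
  qed
qed

lemma D_parity: "odd (n - j - k) \<Longrightarrow> coeff (D n j) k = 0"
proof (induction "n + 2 - k" arbitrary: k rule: less_induct)
  case less
  show ?case
  proof (cases "k + j > n")
    case True then show ?thesis by (rule coeff_D_zero)
  next
    case False
    have kn: "k + j < n"
    proof (rule ccontr)
      assume "\<not> k + j < n"
      then have "n - j - k = 0" using False by simp
      then show False using less.prems by simp
    qed
    have "coeff (D n j) (k+2) = 0"
    proof (cases "k + 2 + j > n")
      case True then show ?thesis by (rule coeff_D_zero)
    next
      case False
      then have "n - j - k = (n - j - (k+2)) + 2" by simp
      then have "odd (n - j - (k+2))" using less.prems by simp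
      moreover have "n + 2 - (k+2) < n + 2 - k" using kn by simp
      ultimately show ?thesis using less.hyps[of "k+2"] by simp
    qed
    then have "(real k + real j - real n) * (real k + real n + real j + 1) * coeff (D n j) k = 0"
      using geg_rec[where k=k and n=n and j=j] by simp
    moreover have "real k + real j - real n \<noteq> 0" using kn by simp
    moreover have "real k + real n + real j + 1 \<noteq> 0" by (simp add: add_pos_nonneg)
    ultimately show ?thesis by simp
  qed
qed

lemma legendre_m1: "poly (legendre_poly n) (-1) = (-1)^n"
proof -
  have "poly (legendre_poly n) (-1) = (\<Sum>i\<le>degree (legendre_poly n). coeff (legendre_poly n) i * (-1)^i)"
    by (simp add: poly_altdef)
  also have "\<dots> = (\<Sum>i\<le>degree (legendre_poly n). coeff (legendre_poly n) i * (-1)^n)"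
  proof (rule sum.cong)
    fix i assume i: "i \<in> {..degree (legendre_poly n)}"
    then have "i \<le> n" using degree_legendre[of n] by simp
    show "coeff (legendre_poly n) i * (-1)^i = coeff (legendre_poly n) i * (-1)^n"
    proof (cases "odd (n - i)")
      case True then show ?thesis using D_parity[where n=n and j=0 and k=i] by simp
    next
      case False
      then have "even (n - i + i) = even i" by simp
      then have "even n = even i" using \<open>i \<le> n\<close> by simp
      then show ?thesis by (simp add: minus_one_power_iff)
    qed
  qed simp
  also have "\<dots> = (-1)^n * poly (legendre_poly n) 1"
    by (simp add: poly_altdef sum_distrib_left algebra_simps)
  finally show ?thesis using legendre_1 by simp
qed

definition Li :: "real poly \<Rightarrow> real" where
  "Li p = integral {-1..1} (poly p)"

lemma Li_has: "(poly p has_integral Li p) {-1..1}"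
  unfolding Li_def
  by (intro integrable_integral integrable_continuous_interval continuous_intros)

lemma Li_add: "Li (p + q) = Li p + Li q"
proof -
  have e: "poly (p + q) = (\<lambda>x. poly p x + poly q x)" by auto
  show ?thesis using has_integral_add[OF Li_has[of p] Li_has[of q]] Li_has[of "p + q"]
    unfolding e by (simp add: has_integral_unique)
qed

lemma Li_diff: "Li (p - q) = Li p - Li q"
proof -
  have e: "poly (p - q) = (\<lambda>x. poly p x - poly q x)" by auto
  show ?thesis using has_integral_diff[OF Li_has[of p] Li_has[of q]] Li_has[of "p - q"]
    unfolding e by (simp add: has_integral_unique)
qed

lemma Li_smult: "Li (smult a p) = a * Li p"
proof -
  have e: "poly (smult a p) = (\<lambda>x. a * poly p x)" by auto
  show ?thesis using has_integral_mult_right[OF Li_has[of p], of a] Li_has[of "smult a p"]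
    unfolding e by (simp add: has_integral_unique)
qed

lemma Li_0: "Li 0 = 0"
proof -
  have e: "poly 0 = (\<lambda>x::real. 0)" by auto
  show ?thesis unfolding Li_def e by simp
qed

lemma Li_pderiv: "Li (pderiv r) = poly r 1 - poly r (-1)"
proof -
  have "(poly (pderiv r) has_integral (poly r 1 - poly r (-1))) {-1..1}"
    by (rule fundamental_theorem_of_calculus)
       (auto intro!: DERIV_subset[OF poly_DERIV] simp: has_real_derivative_iff_has_vector_derivative[symmetric])
  then show ?thesis using Li_has[of "pderiv r"] by (simp add: has_integral_unique)
qed

abbreviation W :: "real poly" where "W \<equiv> [:1,0,-1:]"

lemma poly_W: "poly W x = 1 - x^2"
  by (simp add: power2_eq_square algebra_simps)

definition Lj :: "nat \<Rightarrow> nat \<Rightarrow> real poly \<Rightarrow> real" where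
  "Lj n j r = Li (W^j * r * D n j)"

lemma Lj_add: "Lj n j (p + q) = Lj n j p + Lj n j q"
  unfolding Lj_def by (simp add: algebra_simps Li_add)
lemma Lj_diff: "Lj n j (p - q) = Lj n j p - Lj n j q"
  unfolding Lj_def by (simp add: algebra_simps Li_diff)
lemma Lj_smult: "Lj n j (smult a p) = a * Lj n j p"
  unfolding Lj_def by (simp add: Li_smult)
lemma Lj_0: "Lj n j 0 = 0"
  unfolding Lj_def by (simp add: Li_0)

lemma key_identity:
  "smult ((real n - real j) * (real n + real j + 1)) (W^j * r * D n j)
   = - pderiv (W^(j+1) * r * D n (j+1)) + pderiv (W^(j+1) * pderiv r * D n j)
     + W^j * (smult (2*(real j+1)) ([:0,1:] * pderiv r) - W * pderiv (pderiv r)) * D n j"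
proof -
  have ode: "poly ([:1,0,-1:] * D n (j+2) - smult (2*(real j+1)) ([:0,1:] * D n (j+1))
   + smult ((real n - real j) * (real n + real j + 1)) (D n j)) x = 0" for x
    using geg_ode[where n=n and j=j] by simp
  have "poly (smult ((real n - real j) * (real n + real j + 1)) (W^j * r * D n j)) x
      = poly (- pderiv (W^(j+1) * r * D n (j+1)) + pderiv (W^(j+1) * pderiv r * D n j)
     + W^j * (smult (2*(real j+1)) ([:0,1:] * pderiv r) - W * pderiv (pderiv r)) * D n j) x" for x
  proof -
    define a where "a = poly W x ^ j"
    have pw: "poly (pderiv (W^(j+1))) x = (real j + 1) * a * (-2 * x)"
    proof -
      have "pderiv (W^(Suc j)) = smult (of_nat (Suc j)) (W^j) * pderiv W" by (rule pderiv_power_Suc)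
      then show ?thesis unfolding a_def by (simp add: pderiv_pCons algebra_simps)
    qed
    have ode': "(1 - x^2) * poly (D n (j+2)) x - 2*(real j+1) * x * poly (D n (j+1)) x
      + (real n - real j) * (real n + real j + 1) * poly (D n j) x = 0"
      using ode[of x] by (simp add: poly_W algebra_simps power2_eq_square)
    have d1: "pderiv (D n j) = D n (j+1)" and d2: "pderiv (D n (j+1)) = D n (j+2)"
      by (simp_all add: numeral_2_eq_2)
    define A where "A = W^(j+1)"
    have pA: "poly A x = poly W x * a" unfolding A_def a_def by (simp add: algebra_simps)
    have pA': "poly (pderiv A) x = (real j + 1) * a * (-2 * x)" unfolding A_def by (rule pw)
    have aux: "poly (pderiv (U * V * Z)) x = poly (pderiv U) x * poly V x * poly Z x
       + poly U x * poly (pderiv V) x * poly Z x + poly U x * poly V x * poly (pderiv Z) x" for U V Z :: "real poly"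
      by (simp add: pderiv_mult algebra_simps)
    have "poly (- pderiv (W^(j+1) * r * D n (j+1)) + pderiv (W^(j+1) * pderiv r * D n j)
     + W^j * (smult (2*(real j+1)) ([:0,1:] * pderiv r) - W * pderiv (pderiv r)) * D n j) x
      = - (poly (pderiv A) x * poly r x * poly (D n (j+1)) x
           + poly W x * a * poly (pderiv r) x * poly (D n (j+1)) x
           + poly W x * a * poly r x * poly (D n (j+2)) x)
        + (poly (pderiv A) x * poly (pderiv r) x * poly (D n j) x
           + poly W x * a * poly (pderiv (pderiv r)) x * poly (D n j) x
           + poly W x * a * poly (pderiv r) x * poly (D n (j+1)) x)
        + a * (2*(real j+1) * x * poly (pderiv r) x - poly W x * poly (pderiv (pderiv r)) x) * poly (D n j) x"
      unfolding A_def[symmetric] poly_add poly_minus aux pA d1 d2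
      by (simp add: a_def algebra_simps)
    also have "\<dots> = a * poly r x * (2*(real j+1) * x * poly (D n (j+1)) x - (1 - x^2) * poly (D n (j+2)) x)"
      unfolding pA' poly_W by (simp add: algebra_simps)
    also have "\<dots> = a * poly r x * ((real n - real j) * (real n + real j + 1) * poly (D n j) x)"
    proof -
      have "2*(real j+1) * x * poly (D n (j+1)) x - (1 - x^2) * poly (D n (j+2)) x
          = (real n - real j) * (real n + real j + 1) * poly (D n j) x" using ode' by linarith
      then show ?thesis by simp
    qed
    finally show ?thesis unfolding a_def by (simp add: algebra_simps)
  qed
  then show ?thesis using poly_eq_poly_eq_iff by blast
qed

definition M :: "nat \<Rightarrow> real poly \<Rightarrow> real poly" where
  "M j r = smult (2*(real j+1)) ([:0,1:] * pderiv r) - W * pderiv (pderiv r)"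

lemma Li_uminus: "Li (- p) = - Li p"
  using Li_diff[of 0 p] by (simp add: Li_0)

lemma Lj_key: "(real n - real j) * (real n + real j + 1) * Lj n j r = Lj n j (M j r)"
proof -
  have z: "poly (W^(j+1) * q) 1 = 0" "poly (W^(j+1) * q) (-1) = 0" for q
    by simp_all
  have "(real n - real j) * (real n + real j + 1) * Lj n j r
     = Li (smult ((real n - real j) * (real n + real j + 1)) (W^j * r * D n j))"
    unfolding Lj_def by (simp add: Li_smult)
  also have "\<dots> = Li (- pderiv (W^(j+1) * r * D n (j+1))) + Li (pderiv (W^(j+1) * pderiv r * D n j))
     + Li (W^j * (smult (2*(real j+1)) ([:0,1:] * pderiv r) - W * pderiv (pderiv r)) * D n j)"
    by (simp only: key_identity Li_add)
  also have "\<dots> = Lj n j (M j r)"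
    unfolding Li_uminus Li_pderiv Lj_def M_def using z[of "r * D n (j+1)"] z[of "pderiv r * D n j"]
    by (simp add: mult.assoc)
  finally show ?thesis .
qed

lemma coeff_M: "coeff (M j r) k = (2*(real j+1)*real k + real k * (real k - 1)) * coeff r k
   - (real k + 1) * (real k + 2) * coeff r (k+2)"
proof -
  have c3: "coeff (W * pderiv (pderiv r)) k = coeff (pderiv (pderiv r)) k - (if k \<le> 1 then 0 else coeff (pderiv (pderiv r)) (k-2))"
    unfolding coeff_3_mult by simp
  have c2: "coeff ([:0,1:] * pderiv r) k = (if k = 0 then 0 else coeff (pderiv r) (k-1))"
    unfolding coeff_2_mult by simp
  show ?thesis
  proof (cases k)
    case 0
    then show ?thesis unfolding M_def coeff_diff coeff_smult c3 c2 by (simp add: coeff_pderiv algebra_simps)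
  next
    case (Suc i)
    show ?thesis
    proof (cases i)
      case 0
      then show ?thesis using Suc unfolding M_def coeff_diff coeff_smult c3 c2 by (simp add: coeff_pderiv algebra_simps)
    next
      case (Suc l)
      then have "k - 2 = l" "k - 1 = l + 1" "k = l + 2" using \<open>k = Suc i\<close> by auto
      then show ?thesis unfolding M_def coeff_diff coeff_smult c3 c2 by (simp add: coeff_pderiv algebra_simps)
    qed
  qed
qed

lemma M_degree:
  fixes r :: "real poly"
  defines "d \<equiv> degree r"
  shows "M j r - smult (real d * (real d + 2*real j + 1)) r = 0 \<or>
         degree (M j r - smult (real d * (real d + 2*real j + 1)) r) < d"
proof -
  let ?r2 = "M j r - smult (real d * (real d + 2*real j + 1)) r"
  have ck: "coeff ?r2 k = 0" if "k \<ge> d" for k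
  proof -
    have z: "coeff r (k+2) = 0" using that unfolding d_def by (intro coeff_eq_0) simp
    have e: "coeff ?r2 k = (2*(real j+1)*real k + real k * (real k - 1) - real d * (real d + 2*real j + 1)) * coeff r k"
      unfolding coeff_diff coeff_M coeff_smult z by (simp add: algebra_simps)
    show ?thesis
    proof (cases "k = d")
      case True
      have "2*(real j+1)*real k + real k * (real k - 1) - real d * (real d + 2*real j + 1) = 0"
        unfolding True by (simp add: algebra_simps)
      then show ?thesis unfolding e by simp
    next
      case False
      then have "coeff r k = 0" using that unfolding d_def by (intro coeff_eq_0) simp
      then show ?thesis unfolding e by simp
    qed
  qed
  show ?thesis
  proof (cases "?r2 = 0")
    case False
    have "degree ?r2 \<le> d" using ck by (intro degree_le) auto
    moreover have "coeff ?r2 (degree ?r2) \<noteq> 0" using False by (simp only: leading_coeff_0_iff) simp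
    then have "degree ?r2 \<noteq> d" using ck[of d] by auto
    ultimately show ?thesis by simp
  qed simp
qed

lemma orth: "degree r + j < n \<Longrightarrow> Lj n j r = 0"
proof (induction "degree r" arbitrary: r rule: less_induct)
  case less
  define d where "d = degree r"
  define \<mu> where "\<mu> = real d * (real d + 2*real j + 1)"
  define r2 where "r2 = M j r - smult \<mu> r"
  have "Lj n j r2 = 0"
  proof (cases "r2 = 0")
    case True then show ?thesis by (simp add: Lj_0)
  next
    case False
    then have "degree r2 < degree r" using M_degree[of j r] unfolding r2_def \<mu>_def d_def by simp
    then show ?thesis using less by simp
  qed
  moreover have "M j r = r2 + smult \<mu> r" unfolding r2_def by simp
  ultimately have "(real n - real j) * (real n + real j + 1) * Lj n j r = \<mu> * Lj n j r"
    using Lj_key[of n j r] by (simp add: Lj_add Lj_smult)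
  moreover have "(real n - real j) * (real n + real j + 1) - \<mu> = (real n - real j - real d) * (real n + real j + real d + 1)"
    unfolding \<mu>_def by (simp add: algebra_simps)
  moreover have "real n - real j - real d > 0" using less.prems unfolding d_def by simp
  moreover have "real n + real j + real d + 1 > 0" by (simp add: add_pos_nonneg)
  ultimately have "((real n - real j - real d) * (real n + real j + real d + 1)) * Lj n j r = 0"
    by (metis left_diff_distrib right_minus_eq)
  moreover have "(real n - real j - real d) * (real n + real j + real d + 1) \<noteq> 0"
    using \<open>real n - real j - real d > 0\<close> \<open>real n + real j + real d + 1 > 0\<close> by simp
  ultimately show ?case by simp
qed

lemma aux3: "pderiv (U * V * Z) = pderiv U * V * Z + U * pderiv V * Z + U * V * pderiv Z"
  for U V Z :: "real poly"
  by (simp add: pderiv_mult algebra_simps)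

lemma W_pm1: "poly (W^(Suc i) * q) 1 = 0" "poly (W^(Suc i) * q) (-1) = 0"
  by simp_all

lemma Lj_monom_zero: "k + j < n \<Longrightarrow> Lj n j (monom c k) = 0"
  by (rule orth) (meson degree_monom_le le_less_trans add_le_mono1)

lemma N_step: "Li (W^(i+1) * monom 1 t * D (i+2+t) (i+2)) = 2*(real i+1) * Li (W^i * monom 1 (t+1) * D (i+2+t) (i+1))"
proof -
  define n where "n = i+2+t"
  define S where "S = W^(Suc i) * monom 1 t * D n (i+1)"
  have pw: "pderiv (W^(Suc i)) = smult (of_nat (Suc i)) (W^i) * pderiv W" by (rule pderiv_power_Suc)
  have d: "pderiv (D n (i+1)) = D n (i+2)" by (simp add: numeral_2_eq_2)
  have id: "W^(i+1) * monom 1 t * D n (i+2) = pderiv S + smult (2*(real i+1)) (W^i * monom 1 (t+1) * D n (i+1))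
          - W^(i+1) * monom (real t) (t-1) * D n (i+1)"
  proof -
    have "poly (W^(i+1) * monom 1 t * D n (i+2)) x = poly (pderiv S + smult (2*(real i+1)) (W^i * monom 1 (t+1) * D n (i+1))
          - W^(i+1) * monom (real t) (t-1) * D n (i+1)) x" for x
      unfolding S_def aux3 pw d by (simp add: pderiv_monom pderiv_pCons poly_monom algebra_simps)
    then show ?thesis using poly_eq_poly_eq_iff by blast
  qed
  have "Li (pderiv S) = 0" unfolding Li_pderiv S_def using W_pm1[of i "monom 1 t * D n (i+1)"]
    by (simp add: mult.assoc)
  moreover have "Li (W^(i+1) * monom (real t) (t-1) * D n (i+1)) = 0"
    using Lj_monom_zero[of "t-1" "i+1" n "real t"] unfolding Lj_def n_def by simp
  ultimately show ?thesis unfolding n_def[symmetric] id by (simp add: Li_add Li_diff Li_smult)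
qed

lemma N_base: "Li (monom 1 t * D (t+1) 1) = 2"
proof -
  define n where "n = t+1"
  define S where "S = monom 1 t * legendre_poly n"
  have "pderiv S = monom (real t) (t-1) * legendre_poly n + monom 1 t * D n 1"
    unfolding S_def by (simp add: pderiv_mult pderiv_monom)
  moreover have "Li (pderiv S) = 2"
    unfolding Li_pderiv S_def using legendre_1[of n] legendre_m1[of n] unfolding n_def
    by (simp add: poly_monom)
  moreover have "Li (monom (real t) (t-1) * legendre_poly n) = 0"
    using Lj_monom_zero[of "t-1" 0 n "real t"] unfolding Lj_def n_def by simp
  ultimately show ?thesis unfolding n_def by (simp add: Li_add)
qed

lemma N_val: "i + 1 \<le> n \<Longrightarrow> Li (W^i * monom 1 (n - i - 1) * D n (i+1)) = 2^(i+1) * fact i"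
proof (induction i)
  case 0
  then show ?case using N_base[of "n-1"] by simp
next
  case (Suc i)
  define t where "t = n - i - 2"
  have n: "n = i+2+t" using Suc.prems unfolding t_def by simp
  have "Li (W^(Suc i) * monom 1 (n - Suc i - 1) * D n (Suc i + 1))
      = Li (W^(i+1) * monom 1 t * D (i+2+t) (i+2))" by (simp add: n)
  also have "\<dots> = 2*(real i+1) * Li (W^i * monom 1 (t+1) * D (i+2+t) (i+1))" by (rule N_step)
  also have "\<dots> = 2*(real i+1) * (2^(i+1) * fact i)"
    using Suc.IH Suc.prems by (simp add: n)
  finally show ?case by (simp add: algebra_simps)
qed

lemma poly_ext:
  fixes p q :: "real poly"
  assumes "\<And>x. poly p x = poly q x" shows "p = q"
proof -
  have "poly p = poly q" using assms by (rule ext)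
  then show ?thesis unfolding poly_eq_poly_eq_iff .
qed

lemma E_val:
  assumes "1 \<le> m" "m \<le> n" "k \<le> n - m" "even (n - m - k)"
  shows "Li (W^(m-1) * monom 1 k * D n m) = 2^m * fact (m-1)"
  using assms(3,4)
proof (induction "n - m - k" arbitrary: k rule: less_induct)
  case less
  show ?case
  proof (cases "k = n - m")
    case True
    have e1: "m - 1 + 1 = m" "n - (m - 1) - 1 = n - m" using assms(1,2) by auto
    have "m - 1 + 1 \<le> n" using assms by simp
    from N_val[OF this] show ?thesis unfolding e1 True .
  next
    case False
    have g1: "n - m - k \<ge> 1" using less.prems False by simp
    have g2: "n - m - k \<noteq> 1"
    proof
      assume h: "n - m - k = 1"
      have "even (1::nat)" using less.prems(2) unfolding h .
      then show False by simp
    qed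
    have k2: "k + 2 \<le> n - m" using g1 g2 by linarith
    have sp: "n - m - k = (n - m - (k+2)) + 2" using k2 by simp
    have "even (n - m - (k+2))" using less.prems(2) unfolding sp by simp
    moreover have "n - m - (k+2) < n - m - k" using sp by simp
    ultimately have ih: "Li (W^(m-1) * monom 1 (k+2) * D n m) = 2^m * fact (m-1)"
      using less.hyps[of "k+2"] k2 by simp
    obtain i where i: "m = Suc i" using assms(1) by (cases m) auto
    have id: "W^(m-1) * monom 1 k * D n m = W^(m-1) * monom 1 (k+2) * D n m + W^m * monom 1 k * D n m"
    proof -
      have "poly (W^(m-1) * monom 1 k * D n m) x = poly (W^(m-1) * monom 1 (k+2) * D n m + W^m * monom 1 k * D n m) x" for x
        unfolding i by (simp add: poly_monom algebra_simps power2_eq_square)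
      then show ?thesis using poly_eq_poly_eq_iff by blast
    qed
    have "Lj n m (monom 1 k) = 0" using k2 assms(2) by (intro Lj_monom_zero) simp
    then show ?thesis unfolding id using ih by (simp add: Li_add Lj_def)
  qed
qed

lemma Li_sum: "finite A \<Longrightarrow> Li (sum f A) = (\<Sum>a\<in>A. Li (f a))"
  by (induction A rule: finite_induct) (simp_all add: Li_0 Li_add)

lemma H_poly:
  assumes "1 \<le> m" "m \<le> n"
  shows "Li (W^(m-1) * pcompose (D n m) [:0,x:] * D n m) = 2^m * fact (m-1) * poly (D n m) x"
proof -
  let ?Q = "D n m"
  have pc: "pcompose ?Q [:0,x:] = (\<Sum>k\<le>degree ?Q. monom (coeff ?Q k * x^k) k)"
  proof -
    have "poly (pcompose ?Q [:0,x:]) y = poly (\<Sum>k\<le>degree ?Q. monom (coeff ?Q k * x^k) k) y" for y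
      by (simp add: poly_pcompose poly_altdef[of ?Q "x*y"] poly_sum poly_monom power_mult_distrib algebra_simps)
    then show ?thesis using poly_eq_poly_eq_iff by blast
  qed
  have "Li (W^(m-1) * pcompose ?Q [:0,x:] * ?Q) = (\<Sum>k\<le>degree ?Q. Li (W^(m-1) * monom (coeff ?Q k * x^k) k * ?Q))"
    unfolding pc by (simp add: sum_distrib_left sum_distrib_right Li_sum)
  also have "\<dots> = (\<Sum>k\<le>degree ?Q. coeff ?Q k * x^k * (2^m * fact (m-1)))"
  proof (rule sum.cong)
    fix k assume "k \<in> {..degree ?Q}"
    have e: "W^(m-1) * monom (coeff ?Q k * x^k) k * ?Q = smult (coeff ?Q k * x^k) (W^(m-1) * monom 1 k * ?Q)"
      by (rule poly_ext) (simp add: poly_monom)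
    show "Li (W^(m-1) * monom (coeff ?Q k * x^k) k * ?Q) = coeff ?Q k * x^k * (2^m * fact (m-1))"
    proof (cases "coeff ?Q k = 0")
      case False
      then have "k + m \<le> n" using coeff_D_zero[where n=n and j=m and k=k] by linarith
      moreover have "even (n - m - k)" using False D_parity[where n=n and j=m and k=k] by auto
      ultimately show ?thesis unfolding e Li_smult using E_val[OF assms, of k] by simp
    qed (simp add: Li_0)
  qed simp
  also have "\<dots> = 2^m * fact (m-1) * poly ?Q x"
    by (simp add: poly_altdef sum_distrib_left algebra_simps)
  finally show ?thesis .
qed

lemma DERIV_poly_comp [derivative_intros]:
  "(g has_real_derivative g') (at x) \<Longrightarrow> ((\<lambda>x. poly p (g x)) has_real_derivative poly (pderiv p) (g x) * g') (at x)"
  by (rule DERIV_chain2[OF poly_DERIV])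

lemma alg_P:
  fixes u y x s c z zt P0 P1 P2 N :: real
  assumes uv: "u^2 + y^2 = 1" and xs: "x^2 + s^2 = 1"
    and z: "z = x * u + s * y * c" and zt: "zt = -x * y + s * u * c"
    and Pode: "(1 - z^2) * P2 - 2 * z * P1 + N * P0 = 0"
  shows "y * (u * P1 * zt + y * (P2 * zt * zt - P1 * z)) = -N * y^2 * P0 - ((1-c^2) * (s * y)^2 * P2 - c * (s * y) * P1)"
proof -
  have "y * (u * P1 * zt + y * (P2 * zt * zt - P1 * z)) - (-N * y^2 * P0 - ((1-c^2) * (s * y)^2 * P2 - c * (s * y) * P1))
      = y^2 * ((1 - z^2) * P2 - 2 * z * P1 + N * P0) + P2 * y^2 * ((x^2+s^2 * c^2) * (u^2+y^2-1) + (x^2+s^2-1))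
        + P1 * y * s * c * (u^2+y^2-1)"
    unfolding z zt by (simp add: algebra_simps power2_eq_square)
  also have "\<dots> = 0" using uv xs Pode by simp
  finally show ?thesis by simp
qed

lemma alg_Q:
  fixes u y V Q0 Q1 Q2 N mm :: real
  assumes uv: "u^2 + y^2 = 1"
    and Qode: "(1 - u^2) * Q2 - 2 * (mm+1) * u * Q1 + (N - mm * (mm+1)) * Q0 = 0"
  shows "mm * (-y * y * V * Q0 + mm * V * u * u * Q0 - u * y * y * V * Q1) - (2 * u * y * y * V * Q1 + mm * y * y * V * u * Q1 - y * y * y * y * V * Q2)
       = mm^2 * V * Q0 - N * y^2 * V * Q0"
proof -
  have "mm * (-y * y * V * Q0 + mm * V * u * u * Q0 - u * y * y * V * Q1) - (2 * u * y * y * V * Q1 + mm * y * y * V * u * Q1 - y * y * y * y * V * Q2)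
       - (mm^2 * V * Q0 - N * y^2 * V * Q0)
      = y^2 * V * ((1 - u^2) * Q2 - 2 * (mm+1) * u * Q1 + (N - mm * (mm+1)) * Q0) + (u^2+y^2-1) * (mm^2 * V * Q0 + y^2 * V * Q2)"
    by (simp add: algebra_simps power2_eq_square)
  also have "\<dots> = 0" using uv Qode by simp
  finally show ?thesis by simp
qed

lemma alg_main:
  fixes u y V Q0 Q1 Q2 N mm x s c z zt P0 P1 P2 :: real
  assumes uv: "u^2 + y^2 = 1" and xs: "x^2 + s^2 = 1"
    and z: "z = x * u + s * y * c" and zt: "zt = -x * y + s * u * c"
    and Pode: "(1 - z^2) * P2 - 2 * z * P1 + N * P0 = 0"
    and Qode: "(1 - u^2) * Q2 - 2 * (mm+1) * u * Q1 + (N - mm * (mm+1)) * Q0 = 0"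
  shows "(u * P1 * zt + y * (P2 * zt * zt + P1 * (-z))) * (y * V * Q0) + y * P1 * zt * (mm * V * u * Q0 - y * y * V * Q1)
     - (P1 * zt * (mm * u * y * V * Q0 - y * y * y * V * Q1)
        + P0 * (mm * (-y * y * V * Q0 + mm * V * u * u * Q0 - u * y * y * V * Q1) - (2 * u * y * y * V * Q1 + mm * y * y * V * u * Q1 - y * y * y * y * V * Q2)))
   = -(((1-c^2) * (s * y)^2 * P2 - c * (s * y) * P1 + mm^2 * P0) * (V * Q0))"
proof -
  have p: "y * (u * P1 * zt + y * (P2 * zt * zt - P1 * z)) = -N * y^2 * P0 - ((1-c^2) * (s * y)^2 * P2 - c * (s * y) * P1)"
    by (rule alg_P[OF uv xs z zt Pode])
  have q: "mm * (-y * y * V * Q0 + mm * V * u * u * Q0 - u * y * y * V * Q1) - (2 * u * y * y * V * Q1 + mm * y * y * V * u * Q1 - y * y * y * y * V * Q2)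
       = mm^2 * V * Q0 - N * y^2 * V * Q0"
    by (rule alg_Q[OF uv Qode])
  have "(u * P1 * zt + y * (P2 * zt * zt + P1 * (-z))) * (y * V * Q0) + y * P1 * zt * (mm * V * u * Q0 - y * y * V * Q1)
     - (P1 * zt * (mm * u * y * V * Q0 - y * y * y * V * Q1)
        + P0 * (mm * (-y * y * V * Q0 + mm * V * u * u * Q0 - u * y * y * V * Q1) - (2 * u * y * y * V * Q1 + mm * y * y * V * u * Q1 - y * y * y * y * V * Q2)))
      = (y * (u * P1 * zt + y * (P2 * zt * zt - P1 * z))) * (V * Q0) - P0 * (mm * (-y * y * V * Q0 + mm * V * u * u * Q0 - u * y * y * V * Q1) - (2 * u * y * y * V * Q1 + mm * y * y * V * u * Q1 - y * y * y * y * V * Q2))"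
    by (simp add: algebra_simps)
  also have "\<dots> = (-N * y^2 * P0 - ((1-c^2) * (s * y)^2 * P2 - c * (s * y) * P1)) * (V * Q0) - P0 * (mm^2 * V * Q0 - N * y^2 * V * Q0)"
    unfolding p q ..
  also have "\<dots> = -(((1-c^2) * (s * y)^2 * P2 - c * (s * y) * P1 + mm^2 * P0) * (V * Q0))"
    by (simp add: algebra_simps)
  finally show ?thesis .
qed

lemma deriv_shape:
  fixes u y V Q0 Q1 Q2 mm z zt P0 P1 P2 :: real
  shows "((u * 1 * P1 + zt * P2 * y) * zt + - z * (y * P1)) * (y * V * Q0) +
     (mm * (u * 1 * V) * Q0 + - y * 1 * Q1 * (y * V)) * (y * P1 * zt) -
     (zt * P1 * (mm * u * (y * V) * Q0 - y * y * (y * V) * Q1) +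
      (((0 * u + - y * 1 * mm) * (y * V) + mm * (u * 1 * V) * (mm * u)) *
       Q0 +
       - y * 1 * Q1 * (mm * u * (y * V)) -
       ((2 * (u * 1 * y ^ 1) * (y * V) + mm * (u * 1 * V) * (y * y)) * Q1 +
        - y * 1 * Q2 * (y * y * (y * V)))) *
      P0) =
     (u * P1 * zt + y * (P2 * zt * zt + P1 * (-z))) * (y * V * Q0) + y * P1 * zt * (mm * V * u * Q0 - y * y * V * Q1)
     - (P1 * zt * (mm * u * y * V * Q0 - y * y * y * V * Q1)
        + P0 * (mm * (-y * y * V * Q0 + mm * V * u * u * Q0 - u * y * y * V * Q1) - (2 * u * y * y * V * Q1 + mm * y * y * V * u * Q1 - y * y * y * y * V * Q2)))"
  by (simp add: algebra_simps)

lemma pde_integral: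
  fixes x s c :: real
  assumes xs: "x^2 + s^2 = 1"
  shows "((\<lambda>\<theta>. ((1 - c^2) * (s * sin \<theta>)^2 * poly (pderiv (pderiv (legendre_poly n))) (x * cos \<theta> + s * sin \<theta> * c)
     - c * (s * sin \<theta>) * poly (pderiv (legendre_poly n)) (x * cos \<theta> + s * sin \<theta> * c)
     + (real (Suc k))^2 * poly (legendre_poly n) (x * cos \<theta> + s * sin \<theta> * c))
     * (sin \<theta> ^ k * poly (D n (Suc k)) (cos \<theta>))) has_integral 0) {0..pi}"
proof -
  define P where "P = legendre_poly n"
  define Q where "Q = D n (Suc k)"
  define mm where "mm = real (Suc k)"
  define N where "N = real n * (real n + 1)"
  define \<Phi> where "\<Phi> \<theta> = (sin \<theta> * poly (pderiv P) (x * cos \<theta> + s * sin \<theta> * c) * (- x * sin \<theta> + s * cos \<theta> * c))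
       * (sin \<theta> ^ Suc k * poly Q (cos \<theta>))
     - poly P (x * cos \<theta> + s * sin \<theta> * c) * (mm * cos \<theta> * sin \<theta> ^ Suc k * poly Q (cos \<theta>)
         - (sin \<theta>)^2 * sin \<theta> ^ Suc k * poly (pderiv Q) (cos \<theta>))" for \<theta>
  define F where "F \<theta> = ((1 - c^2) * (s * sin \<theta>)^2 * poly (pderiv (pderiv P)) (x * cos \<theta> + s * sin \<theta> * c)
     - c * (s * sin \<theta>) * poly (pderiv P) (x * cos \<theta> + s * sin \<theta> * c)
     + mm^2 * poly P (x * cos \<theta> + s * sin \<theta> * c))
     * (sin \<theta> ^ k * poly Q (cos \<theta>))" for \<theta>
  have deriv: "(\<Phi> has_real_derivative - F \<theta>) (at \<theta>)" for \<theta>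
  proof -
    define u where "u = cos \<theta>"
    define y where "y = sin \<theta>"
    define V where "V = sin \<theta> ^ k"
    define z where "z = x * u + s * y * c"
    define zt where "zt = - x * y + s * u * c"
    define P0 where "P0 = poly P z"
    define P1 where "P1 = poly (pderiv P) z"
    define P2 where "P2 = poly (pderiv (pderiv P)) z"
    define Q0 where "Q0 = poly Q u"
    define Q1 where "Q1 = poly (pderiv Q) u"
    define Q2 where "Q2 = poly (pderiv (pderiv Q)) u"
    define E where "E = (u * P1 * zt + y * (P2 * zt * zt + P1 * (-z))) * (y * V * Q0) + y * P1 * zt * (mm * V * u * Q0 - y * y * V * Q1)
     - (P1 * zt * (mm * u * y * V * Q0 - y * y * y * V * Q1)
        + P0 * (mm * (-y * y * V * Q0 + mm * V * u * u * Q0 - u * y * y * V * Q1) - (2 * u * y * y * V * Q1 + mm * y * y * V * u * Q1 - y * y * y * y * V * Q2)))"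
    have uv: "u^2 + y^2 = 1" unfolding u_def y_def by simp
    have Pode: "(1 - z^2) * P2 - 2 * z * P1 + N * P0 = 0"
      using arg_cong[OF leg_ode[of n], of "\<lambda>p. poly p z"] unfolding P0_def P1_def P2_def P_def N_def
      by (simp add: algebra_simps power2_eq_square)
    have Qode: "(1 - u^2) * Q2 - 2 * (mm + 1) * u * Q1 + (N - mm * (mm + 1)) * Q0 = 0"
    proof -
      have "poly ([:1,0,-1:] * D n (Suc k+2) - smult (2*(real (Suc k)+1)) ([:0,1:] * D n (Suc k+1))
          + smult ((real n - real (Suc k)) * (real n + real (Suc k) + 1)) (D n (Suc k))) u = 0"
        using geg_ode[where n=n and j="Suc k"] by simp
      moreover have "D n (Suc k+2) = pderiv (pderiv Q)" "D n (Suc k+1) = pderiv Q"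
        unfolding Q_def by (simp_all add: numeral_2_eq_2)
      ultimately show ?thesis unfolding Q0_def Q1_def Q2_def Q_def[symmetric] mm_def N_def
        by (simp add: algebra_simps power2_eq_square)
    qed
    have main: "E = - F \<theta>"
      using alg_main[OF uv xs z_def zt_def Pode Qode, of V] unfolding E_def F_def
      by (simp add: u_def y_def V_def z_def P0_def P1_def P2_def Q0_def Q1_def Q2_def mult.commute)
    have f: "real (Suc k) = mm" "Suc k - Suc 0 = k" "(2::nat) - Suc 0 = 1"
        "sin \<theta> ^ Suc k = y * V" "x * cos \<theta> + s * sin \<theta> * c = z" "- x * sin \<theta> + s * cos \<theta> * c = zt"
        "(sin \<theta>)^2 = y * y" "real 2 = 2"
        "0 * cos \<theta> + - sin \<theta> * 1 * x + ((0 * sin \<theta> + cos \<theta> * 1 * s) * c + 0 * (s * sin \<theta>)) = zt"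
        "0 * sin \<theta> + cos \<theta> * 1 * - x + ((0 * cos \<theta> + - sin \<theta> * 1 * s) * c + 0 * (s * cos \<theta>)) = - z"
      by (simp_all add: mm_def y_def V_def z_def zt_def u_def power2_eq_square)
    have g: "poly P z = P0" "poly (pderiv P) z = P1" "poly (pderiv (pderiv P)) z = P2"
        "poly Q (cos \<theta>) = Q0" "poly (pderiv Q) (cos \<theta>) = Q1" "poly (pderiv (pderiv Q)) (cos \<theta>) = Q2"
        "sin \<theta> ^ k = V" "cos \<theta> = u" "sin \<theta> = y"
        "poly Q u = Q0" "poly (pderiv Q) u = Q1" "poly (pderiv (pderiv Q)) u = Q2" "y ^ k = V"
      by (simp_all add: P0_def P1_def P2_def Q0_def Q1_def Q2_def u_def V_def y_def)
    have "(\<Phi> has_real_derivative E) (at \<theta>)"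
      unfolding \<Phi>_def[abs_def]
      apply (intro derivative_eq_intros)
      apply (rule refl)+
      apply (simp only: f)
      apply (simp only: g)
      unfolding E_def by (rule deriv_shape)
    then show ?thesis unfolding main .
  qed
  have "((\<lambda>\<theta>. - F \<theta>) has_integral (\<Phi> pi - \<Phi> 0)) {0..pi}"
  proof (rule fundamental_theorem_of_calculus)
    fix \<theta> :: real
    show "(\<Phi> has_vector_derivative - F \<theta>) (at \<theta> within {0..pi})"
      unfolding has_real_derivative_iff_has_vector_derivative[symmetric]
      by (rule has_field_derivative_at_within[OF deriv])
  qed simp
  moreover have "\<Phi> pi - \<Phi> 0 = 0" unfolding \<Phi>_def by simp
  ultimately have "((\<lambda>\<theta>. - F \<theta>) has_integral 0) {0..pi}" by simp
  then have "(F has_integral 0) {0..pi}" using has_integral_neg[of "\<lambda>\<theta>. - F \<theta>" 0 "{0..pi}"] by simp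
  then show ?thesis unfolding F_def P_def Q_def mm_def .
qed

lemma integral_mult_real: "integral S (\<lambda>x. c * f x) = c * (integral S f :: real)"
  using integral_cmul[of S c f] by simp

lemma higher_pderiv_pcompose_lin:
  "(pderiv ^^ j) (pcompose p [:a, b:]) = smult (b^j) (pcompose ((pderiv ^^ j) p) [:a, b:])"
  for p :: "real poly"
proof (induction j)
  case (Suc j)
  show ?case using Suc by (simp add: pderiv_smult pderiv_pcompose pderiv_pCons mult.commute)
qed simp

lemma coeff_pcompose_lin:
  "coeff (pcompose p [:a, b:]) j = b^j * poly ((pderiv ^^ j) p) a / fact j"
  for p :: "real poly"
proof -
  have "coeff ((pderiv ^^ j) (pcompose p [:a, b:])) 0 = fact j * coeff (pcompose p [:a, b:]) j"
    using coeff_higher_pderiv[of j "pcompose p [:a, b:]" 0] by (simp add: pochhammer_fact)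
  moreover have "coeff ((pderiv ^^ j) (pcompose p [:a, b:])) 0 = b^j * poly ((pderiv ^^ j) p) a"
    unfolding higher_pderiv_pcompose_lin by (simp add: poly_0_coeff_0[symmetric] poly_pcompose)
  ultimately show ?thesis by (simp add: field_simps)
qed

lemma poly_sum_upto:
  fixes p :: "real poly"
  assumes "degree p \<le> N"
  shows "poly p x = (\<Sum>i\<le>N. coeff p i * x^i)"
proof -
  have "poly p x = (\<Sum>i\<le>degree p. coeff p i * x^i)" by (rule poly_altdef)
  also have "\<dots> = (\<Sum>i\<le>N. coeff p i * x^i)"
    using assms by (intro sum.mono_neutral_left) (auto simp: coeff_eq_0)
  finally show ?thesis .
qed

definition IPc :: "(real \<Rightarrow> real poly) \<Rightarrow> (real \<Rightarrow> real) \<Rightarrow> nat \<Rightarrow> real" where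
  "IPc F G j = integral {0..pi} (\<lambda>\<theta>. coeff (F \<theta>) j * G \<theta>)"

definition IP :: "(real \<Rightarrow> real poly) \<Rightarrow> (real \<Rightarrow> real) \<Rightarrow> nat \<Rightarrow> real poly" where
  "IP F G N = (\<Sum>j\<le>N. monom (IPc F G j) j)"

lemma coeff_IP: "coeff (IP F G N) i = (if i \<le> N then IPc F G i else 0)"
  unfolding IP_def by (simp add: coeff_sum coeff_monom)

lemma IP_has:
  assumes deg: "\<And>\<theta>. degree (F \<theta>) \<le> N"
    and cont: "\<And>j. continuous_on {0..pi} (\<lambda>\<theta>. coeff (F \<theta>) j)"
    and contG: "continuous_on {0..pi} G"
  shows "((\<lambda>\<theta>. poly (F \<theta>) c * G \<theta>) has_integral poly (IP F G N) c) {0..pi}"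
proof -
  have e: "poly (F \<theta>) c * G \<theta> = (\<Sum>j\<le>N. c^j * (coeff (F \<theta>) j * G \<theta>))" for \<theta>
    unfolding poly_sum_upto[OF deg, of \<theta> c] by (simp add: sum_distrib_left sum_distrib_right algebra_simps)
  have "((\<lambda>\<theta>. \<Sum>j\<le>N. c^j * (coeff (F \<theta>) j * G \<theta>)) has_integral (\<Sum>j\<le>N. c^j * IPc F G j)) {0..pi}"
  proof (rule has_integral_sum)
    fix j assume "j \<in> {..N}"
    have "((\<lambda>\<theta>. coeff (F \<theta>) j * G \<theta>) has_integral IPc F G j) {0..pi}"
      unfolding IPc_def
      by (intro integrable_integral integrable_continuous_interval continuous_on_mult cont contG)
    then show "((\<lambda>\<theta>. c^j * (coeff (F \<theta>) j * G \<theta>)) has_integral c^j * IPc F G j) {0..pi}"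
      by (rule has_integral_mult_right)
  qed simp
  moreover have "poly (IP F G N) c = (\<Sum>j\<le>N. c^j * IPc F G j)"
    unfolding IP_def by (simp add: poly_sum poly_monom mult.commute)
  ultimately show ?thesis unfolding e by simp
qed

lemma pderiv_IP:
  assumes deg: "\<And>\<theta>. degree (F \<theta>) \<le> N"
  shows "pderiv (IP F G N) = IP (\<lambda>\<theta>. pderiv (F \<theta>)) G N"
proof (rule poly_eqI)
  fix i
  have c: "IPc (\<lambda>\<theta>. pderiv (F \<theta>)) G i = (real i + 1) * IPc F G (Suc i)"
    unfolding IPc_def coeff_pderiv
    by (simp add: integral_mult_real[symmetric] algebra_simps)
  have z: "IPc F G (Suc N) = 0"
  proof -
    have "coeff (F \<theta>) (Suc N) = 0" for \<theta> using deg[of \<theta>] by (intro coeff_eq_0) simp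
    then show ?thesis unfolding IPc_def by simp
  qed
  show "coeff (pderiv (IP F G N)) i = coeff (IP (\<lambda>\<theta>. pderiv (F \<theta>)) G N) i"
  proof (cases "i < N")
    case True then show ?thesis unfolding coeff_pderiv coeff_IP c by (simp add: algebra_simps)
  next
    case False
    show ?thesis
    proof (cases "i = N")
      case True then show ?thesis unfolding coeff_pderiv coeff_IP c using z by simp
    next
      case False
      with \<open>\<not> i < N\<close> show ?thesis unfolding coeff_pderiv coeff_IP c by simp
    qed
  qed
qed

fun cheb :: "nat \<Rightarrow> real poly" where
  "cheb 0 = 1"
| "cheb (Suc 0) = [:0, 1:]"
| "cheb (Suc (Suc k)) = smult 2 ([:0, 1:] * cheb (Suc k)) - cheb k"

lemma cheb_cos: "poly (cheb k) (cos t) = cos (real k * t)"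
proof (induction k rule: cheb.induct)
  case (3 k)
  have "cos ((real k + 2) * t) = 2 * cos t * cos ((real k + 1) * t) - cos (real k * t)"
  proof -
    have "cos ((real k + 1) * t + t) + cos ((real k + 1) * t - t) = 2 * cos t * cos ((real k + 1) * t)"
      by (simp add: cos_add cos_diff)
    then show ?thesis by (simp add: algebra_simps)
  qed
  then show ?case using 3 by (simp add: algebra_simps)
qed simp_all

lemma cheb_degree_coeff: "degree (cheb k) \<le> k \<and> coeff (cheb k) k = (if k = 0 then 1 else 2^(k-1))"
proof (induction k rule: cheb.induct)
  case (3 k)
  have d1: "degree (pCons 0 (cheb (Suc k))) \<le> Suc (Suc k)"
    using 3(1) degree_pCons_le[of 0 "cheb (Suc k)"] by simp
  have d2: "degree (smult 2 (pCons 0 (cheb (Suc k)))) \<le> Suc (Suc k)"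
    using d1 degree_smult_le[of 2 "pCons 0 (cheb (Suc k))"] by linarith
  have "degree (cheb (Suc (Suc k))) \<le> Suc (Suc k)"
    using degree_diff_le[OF d2, of "cheb k"] 3(2) by simp
  moreover have "coeff (cheb (Suc (Suc k))) (Suc (Suc k)) = 2^(Suc k)"
    using 3 coeff_eq_0[of "cheb k" "Suc (Suc k)"] by (simp add: coeff_pCons)
  ultimately show ?case by simp
qed simp_all

lemma poly_zero_on_cos:
  fixes R :: "real poly"
  assumes "\<And>t. poly R (cos t) = 0"
  shows "R = 0"
proof (rule ccontr)
  assume "R \<noteq> 0"
  then have "finite {x. poly R x = 0}" by (rule poly_roots_finite)
  moreover have "{-1..1} \<subseteq> {x. poly R x = 0}"
  proof
    fix x :: real assume "x \<in> {-1..1}"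
    then have "cos (arccos x) = x" by (intro cos_arccos) auto
    then show "x \<in> {x. poly R x = 0}" using assms[of "arccos x"] by simp
  qed
  ultimately have "finite {-1..1::real}" by (rule finite_subset[rotated])
  then show False using infinite_Icc[of "-1::real" 1] by simp
qed

lemma cheb_ode: "W * pderiv (pderiv (cheb k)) - [:0,1:] * pderiv (cheb k) + smult ((real k)^2) (cheb k) = 0"
proof (rule poly_zero_on_cos)
  fix t :: real
  let ?T = "cheb k"
  have fe: "(\<lambda>t. poly ?T (cos t)) = (\<lambda>t. cos (real k * t))" using cheb_cos by auto
  have d1: "((\<lambda>t. poly ?T (cos t)) has_real_derivative poly (pderiv ?T) (cos t) * (- sin t)) (at t)" for t
    by (auto intro!: derivative_eq_intros)
  have d1': "((\<lambda>t. cos (real k * t)) has_real_derivative - sin (real k * t) * real k) (at t)" for t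
    by (auto intro!: derivative_eq_intros)
  have e1: "poly (pderiv ?T) (cos t) * (- sin t) = - sin (real k * t) * real k" for t
    using d1[of t] d1'[of t] unfolding fe by (rule DERIV_unique)
  have fe2: "(\<lambda>t. poly (pderiv ?T) (cos t) * (- sin t)) = (\<lambda>t. - sin (real k * t) * real k)"
    using e1 by auto
  have d2: "((\<lambda>t. poly (pderiv ?T) (cos t) * (- sin t)) has_real_derivative
      poly (pderiv (pderiv ?T)) (cos t) * (- sin t) * (- sin t) + poly (pderiv ?T) (cos t) * (- cos t)) (at t)"
    by (auto intro!: derivative_eq_intros)
  have d2': "((\<lambda>t. - sin (real k * t) * real k) has_real_derivative - (cos (real k * t) * real k) * real k) (at t)"
    by (auto intro!: derivative_eq_intros)
  have e2: "poly (pderiv (pderiv ?T)) (cos t) * (- sin t) * (- sin t) + poly (pderiv ?T) (cos t) * (- cos t)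
      = - (cos (real k * t) * real k) * real k"
    using d2 d2' unfolding fe2 by (rule DERIV_unique)
  have s2: "(sin t)^2 = 1 - (cos t)^2" by (simp add: sin_squared_eq)
  have e3: "poly (pderiv (pderiv ?T)) (cos t) * (sin t)^2 - poly (pderiv ?T) (cos t) * cos t = - ((real k)^2 * cos (real k * t))"
    using e2 by (simp add: algebra_simps power2_eq_square)
  then have e4: "poly (pderiv (pderiv ?T)) (cos t) * (1 - (cos t)^2) - poly (pderiv ?T) (cos t) * cos t = - ((real k)^2 * cos (real k * t))"
    unfolding s2 .
  show "poly (W * pderiv (pderiv ?T) - [:0,1:] * pderiv ?T + smult ((real k)^2) ?T) (cos t) = 0"
    using e4 cheb_cos[of k t] by (simp add: algebra_simps power2_eq_square)
qed

lemma cheb_zero: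
  fixes r :: "real poly"
  assumes ode: "W * pderiv (pderiv r) - [:0,1:] * pderiv r + smult ((real m)^2) r = 0"
    and cm: "coeff r m = 0"
  shows "r = 0"
proof -
  have rec: "(real k + 1) * (real k + 2) * coeff r (k+2) = ((real k)^2 - (real m)^2) * coeff r k" for k
  proof -
    have E: "coeff (W * pderiv (pderiv r)) k - coeff ([:0,1:] * pderiv r) k + (real m)^2 * coeff r k = 0"
      using arg_cong[OF ode, of "\<lambda>p. coeff p k"] by simp
    have c3: "coeff (W * pderiv (pderiv r)) k = (real k + 1) * (real k + 2) * coeff r (k+2) - real k * (real k - 1) * coeff r k"
    proof (cases k)
      case 0 then show ?thesis unfolding coeff_3_mult by (simp add: coeff_pderiv algebra_simps)
    next
      case (Suc i)
      then show ?thesis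
      proof (cases i)
        case 0 then show ?thesis using Suc unfolding coeff_3_mult by (simp add: coeff_pderiv algebra_simps)
      next
        case (Suc l)
        then have "k - 2 = l" "k = l + 2" using \<open>k = Suc i\<close> by auto
        then show ?thesis unfolding coeff_3_mult by (simp add: coeff_pderiv algebra_simps)
      qed
    qed
    have c2: "coeff ([:0,1:] * pderiv r) k = real k * coeff r k"
      by (cases k) (simp_all add: coeff_pderiv)
    show ?thesis using E unfolding c3 c2 by (simp add: algebra_simps power2_eq_square)
  qed
  have "coeff r k = 0" for k
  proof (induction "degree r + 1 - k" arbitrary: k rule: less_induct)
    case less
    show ?case
    proof (cases "k > degree r")
      case True then show ?thesis by (rule coeff_eq_0)
    next
      case False
      show ?thesis
      proof (cases "k = m")
        case True then show ?thesis using cm by simp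
      next
        case km: False
        have "coeff r (k+2) = 0"
        proof (cases "k + 2 = m")
          case True then show ?thesis using cm by simp
        next
          case False
          have "degree r + 1 - (k+2) < degree r + 1 - k" using \<open>\<not> k > degree r\<close> by simp
          then show ?thesis using less.hyps[of "k+2"] False by simp
        qed
        then have "((real k)^2 - (real m)^2) * coeff r k = 0" using rec[of k] by simp
        moreover have "(real k)^2 - (real m)^2 \<noteq> 0"
        proof
          assume "(real k)^2 - (real m)^2 = 0"
          then have "(real k)^2 = (real m)^2" by simp
          then have "real k = real m \<or> real k = - real m" by (simp add: power2_eq_iff)
          then show False using km by auto
        qed
        ultimately show ?thesis by simp
      qed
    qed
  qed
  then show ?thesis by (simp add: poly_eq_iff)
qed


lemma subst_cos: "((\<lambda>\<theta>. sin \<theta> * poly R (cos \<theta>)) has_integral Li R) {0..pi}"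
proof -
  have "((\<lambda>\<theta>. sin \<theta> *\<^sub>R poly (pcompose R [:0,-1:]) (- cos \<theta>)) has_integral
      integral {- cos 0..- cos pi} (poly (pcompose R [:0,-1:]))) {0..pi}"
  proof (rule has_integral_substitution[where c="-1" and d=1])
    show "(\<lambda>\<theta>. - cos \<theta>) ` {0..pi} \<subseteq> {-1..1}" by auto
    show "continuous_on {-1..1} (poly (pcompose R [:0,-1:]))" by (intro continuous_intros)
    fix \<theta> :: real
    show "((\<lambda>\<theta>. - cos \<theta>) has_real_derivative sin \<theta>) (at \<theta> within {0..pi})"
      by (auto intro!: derivative_eq_intros)
  qed auto
  moreover have "integral {- cos 0..- cos pi} (poly (pcompose R [:0,-1:])) = Li R"
  proof -
    have "integral {-1..1} (\<lambda>y. poly R (- y)) = integral {-1..1} (poly R)"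
      using Henstock_Kurzweil_Integration.integral_reflect_real[of 1 "-1" "poly R"] by simp
    then show ?thesis unfolding Li_def by (simp add: poly_pcompose[abs_def])
  qed
  ultimately show ?thesis by (simp add: poly_pcompose)
qed

lemma cont_pderiv_coeff:
  fixes F :: "real \<Rightarrow> real poly"
  assumes "\<And>j. continuous_on S (\<lambda>\<theta>. coeff (F \<theta>) j)"
  shows "continuous_on S (\<lambda>\<theta>. coeff (pderiv (F \<theta>)) j)"
  unfolding coeff_pderiv by (intro continuous_on_mult continuous_on_const assms)

lemma degree_pderiv_le: "degree p \<le> N \<Longrightarrow> degree (pderiv p) \<le> N" for p :: "real poly"
  by (simp add: degree_pderiv)

lemma core:
  fixes x s c :: real
  assumes xs: "x^2 + s^2 = 1" and m: "m = Suc k" and mn: "m \<le> n"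
  shows "((\<lambda>\<theta>. poly (legendre_poly n) (x * cos \<theta> + s * sin \<theta> * c) * (sin \<theta> ^ k * poly (D n m) (cos \<theta>)))
     has_integral (2 / real m * s^m * poly (D n m) x * poly (cheb m) c)) {0..pi}"
proof -
  define P where "P = legendre_poly n"
  define Q where "Q = D n m"
  define G where "G \<theta> = sin \<theta> ^ k * poly Q (cos \<theta>)" for \<theta>
  define F where "F \<theta> = pcompose P [:x * cos \<theta>, s * sin \<theta>:]" for \<theta>
  have degF: "degree (F \<theta>) \<le> n" for \<theta>
  proof -
    have "degree (F \<theta>) \<le> degree P * degree [:x * cos \<theta>, s * sin \<theta>:]"
      unfolding F_def by (rule degree_pcompose_le)
    also have "\<dots> \<le> n * 1"
      by (intro mult_le_mono) (auto simp: P_def degree_legendre)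
    finally show ?thesis by simp
  qed
  have contF: "continuous_on {0..pi} (\<lambda>\<theta>. coeff (F \<theta>) j)" for j
    unfolding F_def coeff_pcompose_lin by (intro continuous_intros) auto
  have contG: "continuous_on {0..pi} G"
    unfolding G_def by (intro continuous_intros)
  define p where "p = IP F G n"
  have dp1: "pderiv p = IP (\<lambda>\<theta>. pderiv (F \<theta>)) G n"
    unfolding p_def by (rule pderiv_IP[OF degF])
  have dp2: "pderiv (pderiv p) = IP (\<lambda>\<theta>. pderiv (pderiv (F \<theta>))) G n"
    unfolding dp1 by (rule pderiv_IP) (rule degree_pderiv_le[OF degF])
  have I0: "((\<lambda>\<theta>. poly (F \<theta>) c' * G \<theta>) has_integral poly p c') {0..pi}" for c'
    unfolding p_def by (rule IP_has[OF degF contF contG])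
  have I1: "((\<lambda>\<theta>. poly (pderiv (F \<theta>)) c' * G \<theta>) has_integral poly (pderiv p) c') {0..pi}" for c'
    unfolding dp1 by (rule IP_has[OF degree_pderiv_le[OF degF] cont_pderiv_coeff[OF contF] contG])
  have I2: "((\<lambda>\<theta>. poly (pderiv (pderiv (F \<theta>))) c' * G \<theta>) has_integral poly (pderiv (pderiv p)) c') {0..pi}" for c'
    unfolding dp2 by (rule IP_has[OF degree_pderiv_le[OF degree_pderiv_le[OF degF]]
          cont_pderiv_coeff[OF cont_pderiv_coeff[OF contF]] contG])
  have pF0: "poly (F \<theta>) c' = poly P (x * cos \<theta> + s * sin \<theta> * c')" for \<theta> c'
    unfolding F_def by (simp add: poly_pcompose algebra_simps)
  have pF1: "poly (pderiv (F \<theta>)) c' = s * sin \<theta> * poly (pderiv P) (x * cos \<theta> + s * sin \<theta> * c')" for \<theta> c'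
    unfolding F_def by (simp add: pderiv_pcompose pderiv_pCons poly_pcompose algebra_simps)
  have pF2: "poly (pderiv (pderiv (F \<theta>))) c' = (s * sin \<theta>)^2 * poly (pderiv (pderiv P)) (x * cos \<theta> + s * sin \<theta> * c')" for \<theta> c'
    unfolding F_def by (simp add: pderiv_pcompose pderiv_pCons pderiv_mult pderiv_smult poly_pcompose algebra_simps power2_eq_square)
  have ode: "W * pderiv (pderiv p) - [:0,1:] * pderiv p + smult ((real m)^2) p = 0"
  proof (rule poly_ext)
    fix c' :: real
    have "((\<lambda>\<theta>. (1 - c'^2) * (poly (pderiv (pderiv (F \<theta>))) c' * G \<theta>) - c' * (poly (pderiv (F \<theta>)) c' * G \<theta>)
          + (real m)^2 * (poly (F \<theta>) c' * G \<theta>)) has_integral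
        (1 - c'^2) * poly (pderiv (pderiv p)) c' - c' * poly (pderiv p) c' + (real m)^2 * poly p c') {0..pi}"
      by (intro has_integral_add has_integral_diff has_integral_mult_right I0 I1 I2)
    moreover have "((\<lambda>\<theta>. (1 - c'^2) * (poly (pderiv (pderiv (F \<theta>))) c' * G \<theta>) - c' * (poly (pderiv (F \<theta>)) c' * G \<theta>)
          + (real m)^2 * (poly (F \<theta>) c' * G \<theta>)) has_integral 0) {0..pi}"
    proof -
      have e: "(1 - c'^2) * (poly (pderiv (pderiv (F \<theta>))) c' * G \<theta>) - c' * (poly (pderiv (F \<theta>)) c' * G \<theta>)
          + (real m)^2 * (poly (F \<theta>) c' * G \<theta>) =
          ((1 - c'^2) * (s * sin \<theta>)^2 * poly (pderiv (pderiv (legendre_poly n))) (x * cos \<theta> + s * sin \<theta> * c')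
           - c' * (s * sin \<theta>) * poly (pderiv (legendre_poly n)) (x * cos \<theta> + s * sin \<theta> * c')
           + (real (Suc k))^2 * poly (legendre_poly n) (x * cos \<theta> + s * sin \<theta> * c'))
           * (sin \<theta> ^ k * poly (D n (Suc k)) (cos \<theta>))" for \<theta>
        unfolding pF0 pF1 pF2 G_def P_def Q_def m by (simp add: algebra_simps)
      show ?thesis unfolding e by (rule pde_integral[OF xs])
    qed
    ultimately have "(1 - c'^2) * poly (pderiv (pderiv p)) c' - c' * poly (pderiv p) c' + (real m)^2 * poly p c' = 0"
      by (rule has_integral_unique)
    then show "poly (W * pderiv (pderiv p) - [:0,1:] * pderiv p + smult ((real m)^2) p) c' = poly 0 c'"
      by (simp add: algebra_simps power2_eq_square)
  qed
  define A where "A = coeff p m / 2^(m-1)"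
  have cm: "coeff (cheb m) m = 2^(m-1)" using cheb_degree_coeff[of m] m by simp
  have "p - smult A (cheb m) = 0"
  proof (rule cheb_zero[of _ m])
    show "coeff (p - smult A (cheb m)) m = 0" unfolding A_def by (simp add: cm)
    show "W * pderiv (pderiv (p - smult A (cheb m))) - [:0,1:] * pderiv (p - smult A (cheb m))
        + smult ((real m)^2) (p - smult A (cheb m)) = 0"
    proof (rule poly_ext)
      fix y
      have a: "poly (W * pderiv (pderiv p) - [:0,1:] * pderiv p + smult ((real m)^2) p) y = 0" unfolding ode by simp
      have b: "poly (W * pderiv (pderiv (cheb m)) - [:0,1:] * pderiv (cheb m) + smult ((real m)^2) (cheb m)) y = 0"
        unfolding cheb_ode by simp
      show "poly (W * pderiv (pderiv (p - smult A (cheb m))) - [:0,1:] * pderiv (p - smult A (cheb m))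
        + smult ((real m)^2) (p - smult A (cheb m))) y = poly 0 y"
      proof -
        have "poly (W * pderiv (pderiv (p - smult A (cheb m))) - [:0,1:] * pderiv (p - smult A (cheb m))
          + smult ((real m)^2) (p - smult A (cheb m))) y
          = poly (W * pderiv (pderiv p) - [:0,1:] * pderiv p + smult ((real m)^2) p) y
            - A * poly (W * pderiv (pderiv (cheb m)) - [:0,1:] * pderiv (cheb m) + smult ((real m)^2) (cheb m)) y"
          by (simp add: pderiv_diff pderiv_smult algebra_simps)
        then show ?thesis unfolding a b by simp
      qed
    qed
  qed
  then have pA: "p = smult A (cheb m)" by simp
  have cpm: "coeff p m = s^m / fact m * (2^m * fact k * poly Q x)"
  proof -
    have "coeff p m = IPc F G m" unfolding p_def coeff_IP using mn by simp
    also have "\<dots> = integral {0..pi} (\<lambda>\<theta>. s^m / fact m * (sin \<theta> * poly (W^k * pcompose Q [:0,x:] * Q) (cos \<theta>)))"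
    proof -
      have "coeff (F \<theta>) m * G \<theta> = s^m / fact m * (sin \<theta> * poly (W^k * pcompose Q [:0,x:] * Q) (cos \<theta>))" for \<theta>
      proof -
        have "sin \<theta> ^ m * sin \<theta> ^ k = sin \<theta> * (1 - (cos \<theta>)^2) ^ k"
          unfolding m sin_squared_eq[symmetric] by (simp add: power_mult_distrib power2_eq_square power_mult[symmetric] power_add[symmetric] mult_2)
        then show ?thesis unfolding F_def G_def coeff_pcompose_lin Q_def P_def
          by (simp add: poly_pcompose power_mult_distrib algebra_simps power2_eq_square)
      qed
      then show ?thesis unfolding IPc_def by simp
    qed
    also have "\<dots> = s^m / fact m * Li (W^k * pcompose Q [:0,x:] * Q)"
      by (simp only: integral_mult_real integral_unique[OF subst_cos])
    also have "\<dots> = s^m / fact m * (2^m * fact k * poly Q x)"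
      using H_poly[of m n x] m mn unfolding Q_def by simp
    finally show ?thesis .
  qed
  have Aval: "A = 2 / real m * s^m * poly Q x"
  proof -
    have "fact m = real m * fact k" unfolding m by simp
    moreover have "(2::real)^m = 2 * 2^k" unfolding m by simp
    moreover have "A = (s^m / fact m * (2^m * fact k * poly Q x)) / 2^(m-1)" unfolding A_def cpm ..
    ultimately have "A = s^m * (2 * 2^k * fact k * poly Q x) / (real m * fact k * 2^k)"
      unfolding m by simp
    moreover have "(fact k :: real) \<noteq> 0" "(2::real)^k \<noteq> 0" "real m \<noteq> 0" using m by auto
    ultimately show ?thesis by (simp add: field_simps)
  qed
  have "((\<lambda>\<theta>. poly (F \<theta>) c * G \<theta>) has_integral poly p c) {0..pi}" by (rule I0)
  then show ?thesis unfolding pF0 pA Aval G_def P_def Q_def by (simp add: algebra_simps)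
qed

lemma powr_sq:
  fixes y :: real
  assumes "y \<ge> 0" "m \<ge> 1"
  shows "(y^2) powr (real m / 2) = y^m"
proof (cases "y = 0")
  case True then show ?thesis using assms by simp
next
  case False
  then have y: "y > 0" using assms by simp
  have "y^2 = y powr 2" using powr_realpow[OF y, of 2] by simp
  then have "(y^2) powr (real m / 2) = y powr (2 * (real m / 2))" by (simp add: powr_powr)
  also have "\<dots> = y powr (real m)" by simp
  also have "\<dots> = y^m" by (rule powr_realpow[OF y])
  finally show ?thesis .
qed

lemma ferrers_sin:
  assumes "sin t \<ge> 0" "m \<ge> 1"
  shows "ferrers m n (cos t) = (-1)^m * sin t ^ m * poly (D n m) (cos t)"
proof -
  have "1 - (cos t)^2 = (sin t)^2" by (simp add: sin_squared_eq)
  then show ?thesis unfolding ferrers_def using powr_sq[OF assms] by simp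
qed

theorem theorem3p6:
  fixes m n :: nat and \<theta>' \<phi> \<phi>' :: real
  assumes "1 \<le> m" and "m \<le> n"
    and "\<theta>' \<in> {0..pi}" and "\<phi> \<in> {0..<2*pi}" and "\<phi>' \<in> {0..<2*pi}"
  shows "((\<lambda>\<theta>. legendre n (cos \<theta> * cos \<theta>' + sin \<theta> * sin \<theta>' * cos (\<phi> - \<phi>'))
              * ferrers m n (cos \<theta>) * (1 / sin \<theta>))
          has_integral (2 / real m * ferrers m n (cos \<theta>') * cos (real m * (\<phi> - \<phi>')))) {0..pi}"
proof -
  obtain k where m: "m = Suc k" using assms(1) by (cases m) auto
  define x where "x = cos \<theta>'"
  define s where "s = sin \<theta>'"
  define c where "c = cos (\<phi> - \<phi>')"
  have xs: "x^2 + s^2 = 1" unfolding x_def s_def by simp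
  have s0: "s \<ge> 0" unfolding s_def using assms(3) by (simp add: sin_ge_zero)
  have core': "((\<lambda>\<theta>. (-1)^m * (poly (legendre_poly n) (x * cos \<theta> + s * sin \<theta> * c) * (sin \<theta> ^ k * poly (D n m) (cos \<theta>))))
     has_integral ((-1)^m * (2 / real m * s^m * poly (D n m) x * poly (cheb m) c))) {0..pi}"
    by (rule has_integral_mult_right[OF core[OF xs m assms(2)]])
  have rhs: "2 / real m * ferrers m n (cos \<theta>') * cos (real m * (\<phi> - \<phi>'))
        = (-1)^m * (2 / real m * s^m * poly (D n m) x * cos (real m * (\<phi> - \<phi>')))"
  proof -
    have "ferrers m n (cos \<theta>') = (-1)^m * s ^ m * poly (D n m) x"
      using ferrers_sin[of \<theta>' m n] s0 assms(1) unfolding s_def x_def by simp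
    then show ?thesis by (simp add: algebra_simps)
  qed
  show ?thesis
    unfolding rhs
  proof (rule has_integral_spike_finite[OF _ _ core'[unfolded c_def cheb_cos]])
    show "finite {0, pi}" by simp
  next
    fix \<theta> assume th: "\<theta> \<in> {0..pi} - {0, pi}"
    then have sp: "sin \<theta> > 0" by (auto intro!: sin_gt_zero)
    have h1: "ferrers m n (cos \<theta>) * (1 / sin \<theta>) = (-1)^m * (sin \<theta> ^ k * poly (D n m) (cos \<theta>))"
      using ferrers_sin[of \<theta> m n] sp assms(1) unfolding m by (simp add: field_simps)
    have h2: "cos \<theta> * cos \<theta>' + sin \<theta> * sin \<theta>' * cos (\<phi> - \<phi>') = x * cos \<theta> + s * sin \<theta> * cos (\<phi> - \<phi>')"
      unfolding x_def s_def by (simp add: algebra_simps)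
    have "legendre n (cos \<theta> * cos \<theta>' + sin \<theta> * sin \<theta>' * cos (\<phi> - \<phi>')) * ferrers m n (cos \<theta>) * (1 / sin \<theta>)
        = legendre n (cos \<theta> * cos \<theta>' + sin \<theta> * sin \<theta>' * cos (\<phi> - \<phi>')) * (ferrers m n (cos \<theta>) * (1 / sin \<theta>))"
      by (rule mult.assoc)
    also have "\<dots> = legendre n (x * cos \<theta> + s * sin \<theta> * cos (\<phi> - \<phi>')) * ((-1)^m * (sin \<theta> ^ k * poly (D n m) (cos \<theta>)))"
      unfolding h1 h2 ..
    also have "\<dots> = (-1)^m * (poly (legendre_poly n) (x * cos \<theta> + s * sin \<theta> * cos (\<phi> - \<phi>')) * (sin \<theta> ^ k * poly (D n m) (cos \<theta>)))"
      unfolding legendre_def by (simp add: algebra_simps)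
    finally show "legendre n (cos \<theta> * cos \<theta>' + sin \<theta> * sin \<theta>' * cos (\<phi> - \<phi>')) * ferrers m n (cos \<theta>) * (1 / sin \<theta>)
        = (-1)^m * (poly (legendre_poly n) (x * cos \<theta> + s * sin \<theta> * cos (\<phi> - \<phi>')) * (sin \<theta> ^ k * poly (D n m) (cos \<theta>)))" .
  qed
qed


end
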